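(* Let $k$ be a positive integer and $\mathbb{A}$ an alphabet with exactly $k$ letters. The number of extremal $XYX$-avoiding words over $\mathbb{A}$ is $k!$.
   Context: A word is a finite sequence of letters. A factor of $W$ is a word $U$ with $W=W_1UW_2$ for some (possibly empty) words $W_1,W_2$. A word $W$ contains the pattern $XYX$ if some factor of $W$ can be written as $ABA$ with $A,B$ nonempty words ($A$ and $B$ may be equal); otherwise $W$ avoids $XYX$. An extension of a word $W$ over $\mathbb{A}$ is any word $W_1xW_2$ with $W=W_1W_2$ ($W_1,W_2$ possibly empty) and $x\in\mathbb{A}$. A word over $\mathbb{A}$ is extremal $XYX$-avoiding if it avoids $XYX$ and every extension of it contains $XYX$. *)

theory Defs
  imports Main "HOL-Library.Sublist"
begin

definition contains_XYX :: "'a list \<Rightarrow> bool" where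
  "contains_XYX w \<longleftrightarrow> (\<exists>a b. a \<noteq> [] \<and> b \<noteq> [] \<and> sublist (a @ b @ a) w)"

definition extensions :: "'a set \<Rightarrow> 'a list \<Rightarrow> 'a list set" where
  "extensions A w = {w1 @ [x] @ w2 | w1 w2 x. w = w1 @ w2 \<and> x \<in> A}"

definition extremal_XYX :: "'a set \<Rightarrow> 'a list \<Rightarrow> bool" where
  "extremal_XYX A w \<longleftrightarrow> set w \<subseteq> A \<and> \<not> contains_XYX w
     \<and> (\<forall>v \<in> extensions A w. contains_XYX v)"

end

theory Submission
  imports Defs "HOL-Combinatorics.Multiset_Permutations"
begin

fun avoid :: "'a list \<Rightarrow> bool" where
  "avoid [] = True"
| "avoid (x # w) = (avoid w \<and> x \<notin> set (tl w))"

lemma contains_Nil: "\<not> contains_XYX []"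
  by (auto simp: contains_XYX_def)

lemma prefix_case:
  "(\<exists>a b. a \<noteq> [] \<and> b \<noteq> [] \<and> prefix (a @ b @ a) (x # w)) \<longleftrightarrow> x \<in> set (tl w)"
proof
  assume "\<exists>a b. a \<noteq> [] \<and> b \<noteq> [] \<and> prefix (a @ b @ a) (x # w)"
  then obtain a b r where ab: "a \<noteq> []" "b \<noteq> []" "a @ b @ a @ r = x # w"
    by (auto simp: prefix_def)
  obtain a' where a: "a = x # a'" using ab by (cases a) auto
  obtain b1 b' where b: "b = b1 # b'" using ab by (cases b) auto
  have "w = a' @ b1 # b' @ x # a' @ r" using ab a b by simp
  then have "tl w = (tl (a' @ [b1])) @ b' @ x # a' @ r" by (cases a') auto
  then show "x \<in> set (tl w)" by simp
next
  assume "x \<in> set (tl w)"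
  then obtain y t where w: "w = y # t" and "x \<in> set t" by (cases w) auto
  then obtain u v where t: "t = u @ x # v" by (meson split_list)
  have "prefix ([x] @ (y # u) @ [x]) (x # w)" using w t by (simp add: prefix_def)
  then show "\<exists>a b. a \<noteq> [] \<and> b \<noteq> [] \<and> prefix (a @ b @ a) (x # w)" by blast
qed

lemma contains_Cons: "contains_XYX (x # w) \<longleftrightarrow> contains_XYX w \<or> x \<in> set (tl w)"
  unfolding contains_XYX_def sublist_Cons_right using prefix_case[of x w] by blast

lemma avoid_iff: "avoid w \<longleftrightarrow> \<not> contains_XYX w"
  by (induction w) (auto simp: contains_Nil contains_Cons)

lemma avoid_count: "avoid w \<Longrightarrow> count_list w a \<le> 2"
proof (induction w)
  case Nil then show ?case by simp
next
  case (Cons x w)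
  show ?case
  proof (cases "x = a")
    case True
    have "count_list w a \<le> 1"
      using Cons.prems True by (cases w) auto
    then show ?thesis using True by simp
  next
    case False then show ?thesis using Cons by simp
  qed
qed

lemma set_tl_ins: "set (tl (u @ a # a # v)) \<subseteq> insert a (set (tl (u @ a # v)))"
  by (cases u) auto

lemma avoid_double: "avoid (u @ a # v) \<Longrightarrow> a \<notin> set u \<Longrightarrow> a \<notin> set v \<Longrightarrow> avoid (u @ a # a # v)"
proof (induction u)
  case Nil then show ?case by simp
next
  case (Cons y u)
  then show ?case using set_tl_ins[of u a v] by auto
qed

lemma ext_iff: "v \<in> extensions A w \<longleftrightarrow> (\<exists>w1 w2 x. v = w1 @ [x] @ w2 \<and> w = w1 @ w2 \<and> x \<in> A)"
  by (auto simp: extensions_def)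

lemma extremal_iff1:
  "extremal_XYX A w \<longleftrightarrow> set w \<subseteq> A \<and> avoid w \<and> (\<forall>a\<in>A. count_list w a = 2)"
proof
  assume e: "extremal_XYX A w"
  then have s: "set w \<subseteq> A" and av: "avoid w" and ex: "\<forall>v\<in>extensions A w. contains_XYX v"
    by (auto simp: extremal_XYX_def avoid_iff)
  have "count_list w a = 2" if a: "a \<in> A" for a
  proof (rule ccontr)
    assume ne: "count_list w a \<noteq> 2"
    have le: "count_list w a \<le> 2" using avoid_count[OF av] .
    show False
    proof (cases "count_list w a = 0")
      case True
      then have "a \<notin> set w" by (simp add: count_list_0_iff)
      then have "avoid (a # w)" using av by (cases w) auto
      moreover have "[] @ [a] @ w \<in> extensions A w" using a unfolding ext_iff by blast
      ultimately show False using ex avoid_iff by fastforce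
    next
      case False
      then have "count_list w a = Suc 0" using ne le by linarith
      then obtain u v where w: "w = u @ a # v" "a \<notin> set u" "count_list v a = 0"
        using count_list_Suc_split_first by metis
      then have "a \<notin> set v" by (simp add: count_list_0_iff)
      then have "avoid (u @ a # a # v)" using avoid_double av w by metis
      moreover have "u @ [a] @ (a # v) \<in> extensions A w" using a w by (auto simp: ext_iff)
      ultimately show False using ex avoid_iff by fastforce
    qed
  qed
  then show "set w \<subseteq> A \<and> avoid w \<and> (\<forall>a\<in>A. count_list w a = 2)" using s av by blast
next
  assume h: "set w \<subseteq> A \<and> avoid w \<and> (\<forall>a\<in>A. count_list w a = 2)"
  have "contains_XYX v" if v: "v \<in> extensions A w" for v
  proof -
    obtain w1 w2 x where v: "v = w1 @ [x] @ w2" "w = w1 @ w2" "x \<in> A" using v by (auto simp: ext_iff)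
    have "count_list v x = 3" using h v by simp
    then show ?thesis using avoid_count[of v x] avoid_iff by force
  qed
  then show "extremal_XYX A w" using h by (auto simp: extremal_XYX_def avoid_iff)
qed

definition dbl :: "'a list \<Rightarrow> 'a list" where
  "dbl xs = concat (map (\<lambda>x. [x, x]) xs)"

lemma dbl_Nil[simp]: "dbl [] = []" and dbl_Cons[simp]: "dbl (x # xs) = x # x # dbl xs"
  by (auto simp: dbl_def)

lemma set_dbl[simp]: "set (dbl xs) = set xs"
  by (induction xs) auto

lemma dbl_inj: "dbl xs = dbl ys \<Longrightarrow> xs = ys"
proof (induction xs arbitrary: ys)
  case Nil then show ?case by (cases ys) auto
next
  case (Cons x xs) then show ?case by (cases ys) auto
qed

lemma dbl_good: "distinct xs \<Longrightarrow> avoid (dbl xs) \<and> (\<forall>a\<in>set xs. count_list (dbl xs) a = 2)"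
proof (induction xs)
  case Nil then show ?case by simp
next
  case (Cons x xs)
  then show ?case by (cases xs) auto
qed

lemma good_dbl:
  "avoid w \<Longrightarrow> \<forall>a\<in>set w. count_list w a = 2 \<Longrightarrow> \<exists>xs. w = dbl xs \<and> distinct xs"
proof (induction "length w" arbitrary: w rule: less_induct)
  case less
  show ?case
  proof (cases w)
    case Nil then show ?thesis by (intro exI[of _ "[]"]) simp
  next
    case (Cons x w')
    have "count_list w x = 2" using less.prems Cons by simp
    then have "count_list w' x \<noteq> 0" using Cons by simp
    then have "x \<in> set w'" by (simp add: count_list_0_iff)
    moreover have "x \<notin> set (tl w')" using less.prems Cons by simp
    ultimately obtain w'' where w': "w' = x # w''" and xn: "x \<notin> set w''"
      by (cases w') auto
    have av: "avoid w''" using less.prems Cons w' by simp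
    have "\<forall>a\<in>set w''. count_list w'' a = 2"
    proof
      fix a assume "a \<in> set w''"
      then have "a \<noteq> x" using xn by auto
      then show "count_list w'' a = 2" using less.prems Cons w' \<open>a \<in> set w''\<close> by auto
    qed
    then obtain xs where "w'' = dbl xs" "distinct xs"
      using less.hyps[of w''] av Cons w' by auto
    then show ?thesis using Cons w' xn by (intro exI[of _ "x # xs"]) auto
  qed
qed

lemma extremal_set: "{w. extremal_XYX A w} = dbl ` permutations_of_set A"
proof (intro set_eqI iffI)
  fix w assume "w \<in> {w. extremal_XYX A w}"
  then have h: "set w \<subseteq> A" "avoid w" "\<forall>a\<in>A. count_list w a = 2"
    by (auto simp: extremal_iff1)
  then obtain xs where xs: "w = dbl xs" "distinct xs" using good_dbl by blast
  have "A \<subseteq> set w"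
  proof
    fix a assume "a \<in> A"
    then have "count_list w a \<noteq> 0" using h by simp
    then show "a \<in> set w" by (simp add: count_list_0_iff)
  qed
  then have "set xs = A" using h xs by auto
  then show "w \<in> dbl ` permutations_of_set A" using xs by (auto simp: permutations_of_set_def)
next
  fix w assume "w \<in> dbl ` permutations_of_set A"
  then obtain xs where xs: "w = dbl xs" "distinct xs" "set xs = A"
    by (auto simp: permutations_of_set_def)
  then show "w \<in> {w. extremal_XYX A w}" using dbl_good[OF xs(2)]
    by (auto simp: extremal_iff1)
qed

theorem mainTheorem3:
  fixes A :: "'a set" and k :: nat
  assumes "finite A" and "card A = k" and "k > 0"
  shows "card {w. extremal_XYX A w} = fact k"
proof -
  have "inj_on dbl (permutations_of_set A)" by (auto intro: inj_onI dbl_inj)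
  then have "card {w. extremal_XYX A w} = card (permutations_of_set A)"
    by (simp add: extremal_set card_image)
  also have "\<dots> = fact k" using assms card_permutations_of_set by blast
  finally show ?thesis .
qed

end
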